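(* Let $\mathfrak g$ be a finite-dimensional Lie algebra over a field $\mathbb K$ of characteristic zero and let $V=V^2$ be a $\mathfrak g$-module regarded as a dg $\mathfrak g$-module concentrated in degree $2$. A linear map $\alpha_2\colon V^2\to\wedge^2\mathfrak g^\vee\otimes\mathfrak g$ defines a dg Loday–Pirashvili module $\alpha=\{\alpha_2\}$ on $V$ if and only if the corresponding map $\alpha_2\colon\wedge^2\mathfrak g\to\operatorname{Hom}(V^2,\mathfrak g)$ defines an abelian extension of $\mathfrak g$ along $\operatorname{Hom}(V^2,\mathfrak g)$, i.e. is a Chevalley–Eilenberg $2$-cocycle of $\mathfrak g$ with values in the $\mathfrak g$-module $\operatorname{Hom}(V^2,\mathfrak g)$.
   Context: $\operatorname{Hom}(V^2,\mathfrak g)$ is a $\mathfrak g$-module via $(x\cdot\phi)(v)=[x,\phi(v)]-\phi(x\triangleright v)$. For a dg $\mathfrak g$-module $S$, $\Omega_{\mathfrak g}(S)=\wedge^\bullet\mathfrak g^\vee\otimes S$ (degree $p+q$ on $\wedge^p\mathfrak g^\vee\otimes S^q$) carries the total differential $d^S_{\mathrm{tot}}=d^S_{\mathrm{CE}}+d^S$ (Chevalley–Eilenberg differential plus internal differential with sign $(-1)^p$). A dg Loday–Pirashvili module on a non-negative bounded dg $\mathfrak g$-module $V$ is a degree $0$ $\Omega_{\mathfrak g}$-linear map $\alpha\colon\Omega_{\mathfrak g}(V)\to\Omega_{\mathfrak g}(\mathfrak g)$ ($\mathfrak g$ in degree $0$ with adjoint action) with $\alpha\circ d^V_{\mathrm{tot}}=d^{\mathfrak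 g}_{\mathrm{CE}}\circ\alpha$; here $\alpha$ is generated by $\alpha_2$ via $\alpha(\omega\otimes v)=\omega\wedge\alpha_2(v)$. *)

theory Defs
  imports Complex_Main "HOL-Library.Function_Algebras"
begin

text \<open>Cochains of a Lie algebra g with values in a module S are represented as
  alternating multilinear maps g^p \<rightarrow> S, encoded as functions on lists of length p.\<close>

definition del :: "nat \<Rightarrow> 'a list \<Rightarrow> 'a list" where
  "del i xs = take i xs @ drop (Suc i) xs"

definition alt_sign :: "nat \<Rightarrow> 'a::ab_group_add \<Rightarrow> 'a" where
  "alt_sign k a = (if even k then a else - a)"

definition lie_algebra :: "('k::field \<Rightarrow> 'g::ab_group_add \<Rightarrow> 'g) \<Rightarrow> ('g \<Rightarrow> 'g \<Rightarrow> 'g) \<Rightarrow> bool" where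
  "lie_algebra sg br \<longleftrightarrow> vector_space sg
     \<and> (\<forall>x. Vector_Spaces.linear sg sg (br x))
     \<and> (\<forall>y. Vector_Spaces.linear sg sg (\<lambda>x. br x y))
     \<and> (\<forall>x. br x x = 0)
     \<and> (\<forall>x y z. br x (br y z) + br y (br z x) + br z (br x y) = 0)"

definition lie_module :: "('k::field \<Rightarrow> 'g::ab_group_add \<Rightarrow> 'g) \<Rightarrow> ('g \<Rightarrow> 'g \<Rightarrow> 'g)
    \<Rightarrow> ('k \<Rightarrow> 'v::ab_group_add \<Rightarrow> 'v) \<Rightarrow> ('g \<Rightarrow> 'v \<Rightarrow> 'v) \<Rightarrow> bool" where
  "lie_module sg br sv act \<longleftrightarrow> vector_space sv
     \<and> (\<forall>x. Vector_Spaces.linear sv sv (act x))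
     \<and> (\<forall>v. Vector_Spaces.linear sg sv (\<lambda>x. act x v))
     \<and> (\<forall>x y v. act (br x y) v = act x (act y v) - act y (act x v))"

definition cochain :: "('k::field \<Rightarrow> 'g::ab_group_add \<Rightarrow> 'g) \<Rightarrow> ('k \<Rightarrow> 's::ab_group_add \<Rightarrow> 's)
    \<Rightarrow> nat \<Rightarrow> ('g list \<Rightarrow> 's) \<Rightarrow> bool" where
  "cochain sg ss p \<omega> \<longleftrightarrow>
     (\<forall>xs i. length xs = p \<and> i < p \<longrightarrow> Vector_Spaces.linear sg ss (\<lambda>y. \<omega> (xs[i := y])))
   \<and> (\<forall>xs i j. length xs = p \<and> i < j \<and> j < p \<and> xs ! i = xs ! j \<longrightarrow> \<omega> xs = 0)"

definition ce_d :: "('g \<Rightarrow> 'g \<Rightarrow> 'g) \<Rightarrow> ('g \<Rightarrow> 's \<Rightarrow> 's::ab_group_add) \<Rightarrow> nat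
    \<Rightarrow> ('g list \<Rightarrow> 's) \<Rightarrow> 'g list \<Rightarrow> 's" where
  "ce_d br act p \<omega> xs =
     (\<Sum>i<Suc p. alt_sign i (act (xs ! i) (\<omega> (del i xs))))
   + (\<Sum>j<Suc p. \<Sum>i<j. alt_sign (i + j) (\<omega> (br (xs ! i) (xs ! j) # del i (del j xs))))"

text \<open>The Omega_g-linear map alpha generated by alpha_2: alpha(omega tensor v) = omega wedge alpha_2(v),
  applied to a V-valued p-cochain eta (total degree p+2); result is a g-valued (p+2)-cochain.
  The wedge product is the shuffle product; moving the entries i<j to the end has sign (-1)^(i+j+1).\<close>
definition lp_alpha :: "('v \<Rightarrow> 'g list \<Rightarrow> 'g::ab_group_add) \<Rightarrow> nat \<Rightarrow> ('g list \<Rightarrow> 'v)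
    \<Rightarrow> 'g list \<Rightarrow> 'g" where
  "lp_alpha \<alpha>2 p \<eta> xs =
     (\<Sum>j<p + 2. \<Sum>i<j. alt_sign (i + j + 1) (\<alpha>2 (\<eta> (del i (del j xs))) [xs ! i, xs ! j]))"

text \<open>dg Loday--Pirashvili module on V concentrated in degree 2 (internal differential zero, so
  d_tot = d_CE): alpha \<circ> d_tot^V = d_CE^g \<circ> alpha on all of Omega_g(V).\<close>
definition dg_LP_module :: "('k::field \<Rightarrow> 'g::ab_group_add \<Rightarrow> 'g) \<Rightarrow> ('g \<Rightarrow> 'g \<Rightarrow> 'g)
    \<Rightarrow> ('k \<Rightarrow> 'v::ab_group_add \<Rightarrow> 'v) \<Rightarrow> ('g \<Rightarrow> 'v \<Rightarrow> 'v) \<Rightarrow> ('v \<Rightarrow> 'g list \<Rightarrow> 'g) \<Rightarrow> bool" where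
  "dg_LP_module sg br sv act \<alpha>2 \<longleftrightarrow>
     (\<forall>p \<eta> xs. cochain sg sv p \<eta> \<and> length xs = p + 3 \<longrightarrow>
        lp_alpha \<alpha>2 (p + 1) (ce_d br act p \<eta>) xs = ce_d br br (p + 2) (lp_alpha \<alpha>2 p \<eta>) xs)"

definition hom_act :: "('g \<Rightarrow> 'g \<Rightarrow> 'g::ab_group_add) \<Rightarrow> ('g \<Rightarrow> 'v \<Rightarrow> 'v) \<Rightarrow> 'g \<Rightarrow> ('v \<Rightarrow> 'g) \<Rightarrow> ('v \<Rightarrow> 'g)" where
  "hom_act br act x \<phi> = (\<lambda>v. br x (\<phi> v) - \<phi> (act x v))"

definition ce_2cocycle :: "('g \<Rightarrow> 'g \<Rightarrow> 'g) \<Rightarrow> ('g \<Rightarrow> 's \<Rightarrow> 's::ab_group_add) \<Rightarrow> ('g list \<Rightarrow> 's) \<Rightarrow> bool" where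
  "ce_2cocycle br act \<beta> \<longleftrightarrow> (\<forall>x0 x1 x2. ce_d br act 2 \<beta> [x0, x1, x2] = 0)"

end

theory Submission
  imports Defs
begin


lemma lin_additive: "Vector_Spaces.linear s1 s2 f \<Longrightarrow> additive f"
  by (simp add: additive_def linear_iff_module_hom module_hom.add)

lemma length_del[simp]: "i < length ys \<Longrightarrow> length (del i ys) = length ys - 1"
  by (simp add: del_def)

lemma nth_del: "k < length ys - 1 \<Longrightarrow> del i ys ! k = ys ! (if k < i then k else Suc k)"
  by (auto simp: del_def nth_append min_def)

lemma del_map: "del i (map f ys) = map f (del i ys)"
  by (simp add: del_def take_map drop_map)

lemma del_Cons0[simp]: "del 0 (x # ys) = ys" by (simp add: del_def)
lemma del_ConsS[simp]: "del (Suc i) (x # ys) = x # del i ys" by (simp add: del_def)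

lemma distinct_del[simp]: "distinct ys \<Longrightarrow> distinct (del i ys)"
  by (simp add: del_def set_take_disj_set_drop_if_distinct)

lemma sorted_del[simp]: assumes "sorted ys" shows "sorted (del i ys)"
proof -
  have a: "\<forall>x\<in>set (take i ys). \<forall>y\<in>set (drop i ys). x \<le> y"
    using assms sorted_append[of "take i ys" "drop i ys"] by simp
  have "set (drop (Suc i) ys) \<subseteq> set (drop i ys)" by (simp add: set_drop_subset_set_drop)
  then show ?thesis using a assms unfolding del_def by (auto simp: sorted_wrt_append)
qed

lemma set_del: "distinct ys \<Longrightarrow> k < length ys \<Longrightarrow> set (del k ys) = set ys - {ys ! k}"
proof -
  assume d: "distinct ys" and k: "k < length ys"
  have e: "ys = take k ys @ ys ! k # drop (Suc k) ys" using k by (simp add: id_take_nth_drop)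
  have "distinct (take k ys @ ys ! k # drop (Suc k) ys)" using d e by simp
  then show ?thesis unfolding del_def by (subst (3) e) auto
qed

definition fl :: "nat \<Rightarrow> nat set \<Rightarrow> nat list" where
  "fl n S = filter (\<lambda>x. x \<notin> S) [0..<n]"

lemma canon: "sorted ys \<Longrightarrow> distinct ys \<Longrightarrow> set ys = {0..<n} - S \<Longrightarrow> ys = fl n S"
  unfolding fl_def by (rule sorted_distinct_set_unique) (auto intro: sorted_wrt_filter)

definition s1 :: "nat \<Rightarrow> nat \<Rightarrow> nat" where
  "s1 m k = (if k < m then k else Suc k)"
definition s2 :: "nat \<Rightarrow> nat \<Rightarrow> nat \<Rightarrow> nat" where
  "s2 i j k = (if k < i then k else if Suc k < j then Suc k else Suc (Suc k))"

lemma U1: "m < n \<Longrightarrow> k < n - 1 \<Longrightarrow> del m [0..<n] ! k = s1 m k"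
  by (simp add: nth_del s1_def)
lemma U2: "i < j \<Longrightarrow> j < n \<Longrightarrow> k < n - 2 \<Longrightarrow> del i (del j [0..<n]) ! k = s2 i j k"
  by (simp add: nth_del s2_def)
lemma L1: "m < n \<Longrightarrow> del m [0..<n] = fl n {m}"
  by (rule canon) (auto simp: set_del)
lemma L2: "i < j \<Longrightarrow> j < n \<Longrightarrow> del i (del j [0..<n]) = fl n {i,j}"
  by (rule canon) (auto simp: set_del nth_del)
lemma L3: "i < j \<Longrightarrow> j < n \<Longrightarrow> k < n - 2 \<Longrightarrow> del k (del i (del j [0..<n])) = fl n {i,j,s2 i j k}"
  by (rule canon) (auto simp: set_del nth_del s2_def)
lemma L4: "i < j \<Longrightarrow> j < n \<Longrightarrow> k < l \<Longrightarrow> l < n - 2 \<Longrightarrow>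
   del k (del l (del i (del j [0..<n]))) = fl n {i,j,s2 i j k,s2 i j l}"
  by (rule canon) (auto simp: set_del nth_del s2_def)
lemma R1: "m < n \<Longrightarrow> i < j \<Longrightarrow> j < n - 1 \<Longrightarrow> del i (del j (del m [0..<n])) = fl n {m, s1 m i, s1 m j}"
  by (rule canon) (auto simp: set_del nth_del s1_def)



definition P3 :: "nat \<Rightarrow> (nat \<times> nat \<times> nat) set" where
  "P3 n = {(i,j,c). i < j \<and> j < n \<and> c < n \<and> c \<noteq> i \<and> c \<noteq> j}"
definition P4 :: "nat \<Rightarrow> (nat \<times> nat \<times> nat \<times> nat) set" where
  "P4 n = {(i,j,a,b). i < j \<and> j < n \<and> a < b \<and> b < n \<and> a \<noteq> i \<and> a \<noteq> j \<and> b \<noteq> i \<and> b \<noteq> j}"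
definition T3 :: "nat \<Rightarrow> (nat \<times> nat \<times> nat) set" where
  "T3 n = {(a,b,c). a < b \<and> b < c \<and> c < n}"

definition pos2 :: "nat \<Rightarrow> nat \<Rightarrow> nat \<Rightarrow> nat" where
  "pos2 i j c = c - (if i < c then 1 else 0) - (if j < c then 1 else 0)"
definition pos1 :: "nat \<Rightarrow> nat \<Rightarrow> nat" where
  "pos1 m c = (if m < c then c - 1 else c)"

lemma sumS3: assumes "finite A" "\<And>x. finite (B x)" "\<And>x y. finite (C x y)"
  shows "(\<Sum>x\<in>A. \<Sum>y\<in>B x. \<Sum>z\<in>C x y. f x y z) = (\<Sum>(x,y,z)\<in>(SIGMA x:A. SIGMA y:B x. C x y). f x y z)"
proof -
  have "(\<Sum>x\<in>A. \<Sum>y\<in>B x. \<Sum>z\<in>C x y. f x y z) = (\<Sum>x\<in>A. \<Sum>(y,z)\<in>(SIGMA y:B x. C x y). f x y z)"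
    by (rule sum.cong[OF refl], rule sum.Sigma) (auto intro: assms)
  also have "\<dots> = (\<Sum>(x,y,z)\<in>(SIGMA x:A. SIGMA y:B x. C x y). f x y z)"
    by (rule sum.Sigma) (auto intro: assms)
  finally show ?thesis .
qed

lemma sum3: "(\<Sum>j<(n::nat). \<Sum>i<j. \<Sum>k<m. f j i k) = (\<Sum>(j,i,k)\<in>(SIGMA j:{..<n}. SIGMA i:{..<j}. {..<m::nat}). f j i k)"
  by (rule sumS3) auto

lemma sum3': "(\<Sum>j<(n::nat). \<Sum>i<(m::nat). \<Sum>k<i. f j i k) = (\<Sum>(j,i,k)\<in>(SIGMA j:{..<n}. SIGMA i:{..<m}. {..<i::nat}). f j i k)"
  by (rule sumS3) auto

lemma sum4: "(\<Sum>j<(n::nat). \<Sum>i<j. \<Sum>l<m. \<Sum>k<l. f j i l k) =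
   (\<Sum>(j,i,l,k)\<in>(SIGMA j:{..<n}. SIGMA i:{..<j}. SIGMA l:{..<m::nat}. {..<l}). f j i l k)"
proof -
  have "(\<Sum>j<n. \<Sum>i<j. \<Sum>l<m. \<Sum>k<l. f j i l k) = (\<Sum>j<n. \<Sum>i<j. \<Sum>(l,k)\<in>(SIGMA l:{..<m}. {..<l}). f j i l k)"
    by (intro sum.cong refl sum.Sigma) auto
  also have "\<dots> = (\<Sum>(j,i,l,k)\<in>(SIGMA j:{..<n}. SIGMA i:{..<j}. SIGMA l:{..<m::nat}. {..<l}). f j i l k)"
    by (subst sumS3) (auto simp: split_def)
  finally show ?thesis .
qed

lemma G1: "(\<Sum>j<n. \<Sum>i<j. \<Sum>k<n-2. F i j (s2 i j k)) = (\<Sum>(i,j,c)\<in>P3 n. F i j c)"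
  unfolding sum3
  apply (rule sum.reindex_bij_witness[where i="\<lambda>(i,j,c). (j,i,pos2 i j c)" and j="\<lambda>(j,i,k). (i,j,s2 i j k)"])
  by (auto simp: P3_def s2_def pos2_def split: if_splits)

lemma G2: "(\<Sum>c<n. \<Sum>j<n-1. \<Sum>i<j. F (s1 c i) (s1 c j) c) = (\<Sum>(i,j,c)\<in>P3 n. F i j c)"
  unfolding sum3'
  apply (rule sum.reindex_bij_witness[where i="\<lambda>(i,j,c). (c,pos1 c j,pos1 c i)" and j="\<lambda>(c,j,i). (s1 c i,s1 c j,c)"])
  by (auto simp: P3_def s1_def pos1_def split: if_splits)

lemma G4: "(\<Sum>j<n. \<Sum>i<j. \<Sum>l<n-2. \<Sum>k<l. F i j (s2 i j k) (s2 i j l)) = (\<Sum>(i,j,a,b)\<in>P4 n. F i j a b)"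
  unfolding sum4
  apply (rule sum.reindex_bij_witness[where i="\<lambda>(i,j,a,b). (j,i,pos2 i j b,pos2 i j a)" and j="\<lambda>(j,i,l,k). (i,j,s2 i j k,s2 i j l)"])
  by (auto simp: P4_def s2_def pos2_def split: if_splits)

lemma Swap: "(\<Sum>(i,j,a,b)\<in>P4 n. F i j a b) = (\<Sum>(i,j,a,b)\<in>P4 n. F a b i j)"
  apply (rule sum.reindex_bij_witness[where i="\<lambda>(i,j,a,b). (a,b,i,j)" and j="\<lambda>(i,j,a,b). (a,b,i,j)"])
  by (auto simp: P4_def)

definition srt :: "nat \<times> nat \<times> nat \<Rightarrow> (nat \<times> nat \<times> nat) \<times> nat" where
  "srt = (\<lambda>(i,j,c). if c < i then ((c,i,j),0) else if c < j then ((i,c,j),1) else ((i,j,c),2))"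
definition uns :: "(nat \<times> nat \<times> nat) \<times> nat \<Rightarrow> nat \<times> nat \<times> nat" where
  "uns = (\<lambda>((a,b,c),t). if t = 0 then (b,c,a) else if t = 1 then (a,c,b) else (a,b,c))"

lemma Group: "(\<Sum>(i,j,c)\<in>P3 n. H i j c) = (\<Sum>(a,b,c)\<in>T3 n. H b c a + H a c b + H a b c)"
proof -
  have "(\<Sum>(i,j,c)\<in>P3 n. H i j c) = (\<Sum>x\<in>T3 n \<times> {..<3}. (case uns x of (i,j,c) \<Rightarrow> H i j c))"
    apply (rule sum.reindex_bij_witness[where i=uns and j=srt])
    by (auto simp: P3_def T3_def srt_def uns_def split: if_splits)
  also have "\<dots> = (\<Sum>y\<in>T3 n. \<Sum>t<3. (case uns (y,t) of (i,j,c) \<Rightarrow> H i j c))"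
    by (simp add: sum.cartesian_product)
  also have "\<dots> = (\<Sum>(a,b,c)\<in>T3 n. H b c a + H a c b + H a b c)"
    by (rule sum.cong) (auto simp: uns_def numeral_3_eq_3)
  finally show ?thesis .
qed



lemma E1: "length xs = n \<Longrightarrow> i < j \<Longrightarrow> j < n \<Longrightarrow> k < n - 2 \<Longrightarrow> del i (del j xs) ! k = xs ! s2 i j k"
proof -
  assume a: "length xs = n" "i < j" "j < n" "k < n - 2"
  have "xs = map (nth xs) [0..<n]" using map_nth[of xs] a(1) by metis
  then have "del i (del j xs) = map (nth xs) (del i (del j [0..<n]))" by (metis del_map)
  then show ?thesis using a by (simp add: U2)
qed

lemma E2: "length xs = n \<Longrightarrow> i < j \<Longrightarrow> j < n \<Longrightarrow> k < n - 2 \<Longrightarrow>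
   del k (del i (del j xs)) = map (nth xs) (fl n {i,j,s2 i j k})"
proof -
  assume a: "length xs = n" "i < j" "j < n" "k < n - 2"
  have "xs = map (nth xs) [0..<n]" using map_nth[of xs] a(1) by metis
  then have "del k (del i (del j xs)) = map (nth xs) (del k (del i (del j [0..<n])))" by (metis del_map)
  then show ?thesis using a by (simp add: L3)
qed

lemma E3: "length xs = n \<Longrightarrow> i < j \<Longrightarrow> j < n \<Longrightarrow> k < l \<Longrightarrow> l < n - 2 \<Longrightarrow>
   del k (del l (del i (del j xs))) = map (nth xs) (fl n {i,j,s2 i j k,s2 i j l})"
proof -
  assume a: "length xs = n" "i < j" "j < n" "k < l" "l < n - 2"
  have "xs = map (nth xs) [0..<n]" using map_nth[of xs] a(1) by metis
  then have "del k (del l (del i (del j xs))) = map (nth xs) (del k (del l (del i (del j [0..<n]))))" by (metis del_map)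
  then show ?thesis using a by (simp add: L4)
qed

lemma E4: "length xs = n \<Longrightarrow> m < n \<Longrightarrow> i < n - 1 \<Longrightarrow> del m xs ! i = xs ! s1 m i"
proof -
  assume a: "length xs = n" "m < n" "i < n - 1"
  have "xs = map (nth xs) [0..<n]" using map_nth[of xs] a(1) by metis
  then have "del m xs = map (nth xs) (del m [0..<n])" by (metis del_map)
  then show ?thesis using a by (simp add: U1)
qed

lemma E5: "length xs = n \<Longrightarrow> m < n \<Longrightarrow> i < j \<Longrightarrow> j < n - 1 \<Longrightarrow>
   del i (del j (del m xs)) = map (nth xs) (fl n {m, s1 m i, s1 m j})"
proof -
  assume a: "length xs = n" "m < n" "i < j" "j < n - 1"
  have "xs = map (nth xs) [0..<n]" using map_nth[of xs] a(1) by metis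
  then have "del i (del j (del m xs)) = map (nth xs) (del i (del j (del m [0..<n])))" by (metis del_map)
  then show ?thesis using a by (simp add: R1)
qed

lemma alt_add: "alt_sign k (a + b) = alt_sign k a + alt_sign k (b::'a::ab_group_add)"
  by (simp add: alt_sign_def)
lemma alt_additive: "additive (alt_sign k :: 'a::ab_group_add \<Rightarrow> 'a)"
  by (simp add: additive_def alt_add)
lemma alt_sum: "alt_sign k (sum f A) = (\<Sum>x\<in>A. alt_sign k (f x :: 'a::ab_group_add))"
  by (rule additive.sum[OF alt_additive])
lemma additive_alt: "additive f \<Longrightarrow> f (alt_sign k x) = alt_sign k (f x)"
  by (simp add: alt_sign_def additive.minus)
lemma alt_alt: "alt_sign a (alt_sign b x) = alt_sign (a + b) (x::'a::ab_group_add)"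
  by (simp add: alt_sign_def)
lemma alt_cong: "even a = even b \<Longrightarrow> alt_sign a x = alt_sign b x"
  by (simp add: alt_sign_def)
lemma alt_cong2: "even a = even b \<Longrightarrow> x = y \<Longrightarrow> alt_sign a x = alt_sign b y"
  by (simp add: alt_sign_def)
lemma sum_apply': "(sum f A) x = (\<Sum>a\<in>A. f a x)"
  by (induct A rule: infinite_finite_induct) auto

lemma shift2: "(\<Sum>j<Suc (Suc q). \<Sum>i<j. f i j) = (\<Sum>k<Suc q. f 0 (Suc k)) + (\<Sum>l<Suc q. \<Sum>k<l. f (Suc k) (Suc l) :: 'a::comm_monoid_add)"
  by (simp only: sum.lessThan_Suc_shift sum.distrib) simp



lemma coc: "ce_d br (hom_act br act) 2 (\<lambda>xs v. \<alpha>2 v xs) [x,y,z] v =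
   (br x (\<alpha>2 v [y,z]) - \<alpha>2 (act x v) [y,z]) - (br y (\<alpha>2 v [x,z]) - \<alpha>2 (act y v) [x,z])
   + (br z (\<alpha>2 v [x,y]) - \<alpha>2 (act z v) [x,y])
   - \<alpha>2 v [br x y, z] + \<alpha>2 v [br x z, y] - \<alpha>2 v [br y z, x]"
proof -
  have "\<not> Suc (Suc 0) dvd Suc (Suc (Suc 0))" by presburger
  then show ?thesis by (simp add: ce_d_def hom_act_def sum_apply' numeral_2_eq_2 alt_sign_def del_def)
qed

lemma main:
  fixes br :: "'g \<Rightarrow> 'g \<Rightarrow> 'g::ab_group_add" and act :: "'g \<Rightarrow> 'v \<Rightarrow> 'v::ab_group_add"
    and \<alpha>2 :: "'v \<Rightarrow> 'g list \<Rightarrow> 'g" and \<eta> :: "'g list \<Rightarrow> 'v"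
  assumes addA: "\<And>x y. additive (\<lambda>v. \<alpha>2 v [x,y])"
    and addB: "\<And>x. additive (br x)"
    and len: "length xs = p + 3"
  shows "lp_alpha \<alpha>2 (p+1) (ce_d br act p \<eta>) xs - ce_d br br (p+2) (lp_alpha \<alpha>2 p \<eta>) xs
     = (\<Sum>(a,b,c)\<in>T3 (p+3). alt_sign (a+b+c) (ce_d br (hom_act br act) 2 (\<lambda>xs v. \<alpha>2 v xs)
          [xs!a, xs!b, xs!c] (\<eta> (map (nth xs) (fl (p+3) {a,b,c})))))"
proof -
  define n where "n = p + 3"
  have A_add: "\<And>a b x y. \<alpha>2 (a + b) [x,y] = \<alpha>2 a [x,y] + \<alpha>2 b [x,y]"
    using additive.add[OF addA] by simp
  have A_sum: "\<And>f A x y. \<alpha>2 (sum f A) [x,y] = (\<Sum>a\<in>A. \<alpha>2 (f a) [x,y])"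
    using additive.sum[OF addA] by simp
  have A_alt: "\<And>k v x y. \<alpha>2 (alt_sign k v) [x,y] = alt_sign k (\<alpha>2 v [x,y])"
    using additive_alt[OF addA] by simp
  have B_add: "\<And>a b x. br x (a + b) = br x a + br x b"
    using additive.add[OF addB] by simp
  have B_sum: "\<And>f A x. br x (sum f A) = (\<Sum>a\<in>A. br x (f a))"
    using additive.sum[OF addB] by simp
  have B_alt: "\<And>k v x. br x (alt_sign k v) = alt_sign k (br x v)"
    using additive_alt[OF addB] by simp
  have lenn: "length xs = n" using len n_def by simp

  define La where "La = (\<lambda>i j c. alt_sign (i+j+1+c+(if i<c then 1 else 0)+(if j<c then 1 else 0))
     (\<alpha>2 (act (xs!c) (\<eta> (map (nth xs) (fl n {i,j,c})))) [xs!i, xs!j]))"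
  define Lb where "Lb = (\<lambda>i j a b. alt_sign (i+j+1+a+b+(if i<a then 1 else 0)+(if j<a then 1 else 0)
        +(if i<b then 1 else 0)+(if j<b then 1 else 0))
     (\<alpha>2 (\<eta> (br (xs!a) (xs!b) # map (nth xs) (fl n {i,j,a,b}))) [xs!i, xs!j]))"

  have L: "lp_alpha \<alpha>2 (p+1) (ce_d br act p \<eta>) xs = (\<Sum>(i,j,c)\<in>P3 n. La i j c) + (\<Sum>(i,j,a,b)\<in>P4 n. Lb i j a b)"
  proof -
    have e: "p + 1 + 2 = n" using n_def by simp
    have "lp_alpha \<alpha>2 (p+1) (ce_d br act p \<eta>) xs =
       (\<Sum>j<n. \<Sum>i<j. (\<Sum>k<Suc p. La i j (s2 i j k)) + (\<Sum>l<Suc p. \<Sum>k<l. Lb i j (s2 i j k) (s2 i j l)))"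
      unfolding lp_alpha_def e
    proof (intro sum.cong refl)
      fix j i assume j: "j \<in> {..<n}" and i: "i \<in> {..<j}"
      have "alt_sign (i + j + 1) (\<alpha>2 (ce_d br act p \<eta> (del i (del j xs))) [xs ! i, xs ! j]) =
        (\<Sum>k<Suc p. alt_sign (i+j+1) (alt_sign k (\<alpha>2 (act (del i (del j xs) ! k) (\<eta> (del k (del i (del j xs))))) [xs ! i, xs ! j])))
        + (\<Sum>l<Suc p. \<Sum>k<l. alt_sign (i+j+1) (alt_sign (k+l) (\<alpha>2 (\<eta> (br (del i (del j xs) ! k) (del i (del j xs) ! l)
             # del k (del l (del i (del j xs))))) [xs ! i, xs ! j])))"
        unfolding ce_d_def by (simp only: A_add A_sum A_alt alt_add alt_sum)
      also have "\<dots> = (\<Sum>k<Suc p. La i j (s2 i j k)) + (\<Sum>l<Suc p. \<Sum>k<l. Lb i j (s2 i j k) (s2 i j l))"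
      proof (intro arg_cong2[where f="(+)"] sum.cong refl)
        fix k assume k: "k \<in> {..<Suc p}"
        have kk: "k < n - 2" using k n_def by simp
        show "alt_sign (i+j+1) (alt_sign k (\<alpha>2 (act (del i (del j xs) ! k) (\<eta> (del k (del i (del j xs))))) [xs ! i, xs ! j]))
           = La i j (s2 i j k)"
          unfolding La_def alt_alt
          apply (rule alt_cong2)
          using i j kk apply (auto simp: s2_def)[1]
          using i j kk by (simp add: E1[OF lenn] E2[OF lenn])
      next
        fix l k assume l: "l \<in> {..<Suc p}" and k: "k \<in> {..<l}"
        have kk: "k < n - 2" "l < n - 2" "k < l" using k l n_def by simp_all
        show "alt_sign (i+j+1) (alt_sign (k+l) (\<alpha>2 (\<eta> (br (del i (del j xs) ! k) (del i (del j xs) ! l)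
             # del k (del l (del i (del j xs))))) [xs ! i, xs ! j])) = Lb i j (s2 i j k) (s2 i j l)"
          unfolding Lb_def alt_alt
          apply (rule alt_cong2)
          using i j kk apply (auto simp: s2_def)[1]
          using i j kk by (simp add: E1[OF lenn] E3[OF lenn])
      qed
      finally show "alt_sign (i + j + 1) (\<alpha>2 (ce_d br act p \<eta> (del i (del j xs))) [xs ! i, xs ! j]) =
         (\<Sum>k<Suc p. La i j (s2 i j k)) + (\<Sum>l<Suc p. \<Sum>k<l. Lb i j (s2 i j k) (s2 i j l))" .
    qed
    also have "\<dots> = (\<Sum>j<n. \<Sum>i<j. \<Sum>k<Suc p. La i j (s2 i j k)) + (\<Sum>j<n. \<Sum>i<j. \<Sum>l<Suc p. \<Sum>k<l. Lb i j (s2 i j k) (s2 i j l))"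
      by (simp only: sum.distrib)
    also have "\<dots> = (\<Sum>(i,j,c)\<in>P3 n. La i j c) + (\<Sum>(i,j,a,b)\<in>P4 n. Lb i j a b)"
      using G1[of La n] G4[of Lb n] n_def by simp
    finally show ?thesis .
  qed
  define R1 where "R1 = (\<lambda>i j c. alt_sign (c+i+j+1+(if c<i then 1 else 0)+(if c<j then 1 else 0))
     (br (xs!c) (\<alpha>2 (\<eta> (map (nth xs) (fl n {c,i,j}))) [xs!i, xs!j])))"
  define R2a where "R2a = (\<lambda>i j c. alt_sign (i+j+c+(if i<c then 1 else 0)+(if j<c then 1 else 0))
     (\<alpha>2 (\<eta> (map (nth xs) (fl n {i,j,c}))) [br (xs!i) (xs!j), xs!c]))"
  define R2b where "R2b = (\<lambda>i j a b. alt_sign (i+j+a+b+1+(if i<a then 1 else 0)+(if j<a then 1 else 0)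
        +(if i<b then 1 else 0)+(if j<b then 1 else 0))
     (\<alpha>2 (\<eta> (br (xs!i) (xs!j) # map (nth xs) (fl n {i,j,a,b}))) [xs!a, xs!b]))"

  have R: "ce_d br br (p+2) (lp_alpha \<alpha>2 p \<eta>) xs =
     (\<Sum>(i,j,c)\<in>P3 n. R1 i j c) + ((\<Sum>(i,j,c)\<in>P3 n. R2a i j c) + (\<Sum>(i,j,a,b)\<in>P4 n. R2b i j a b))"
  proof -
    have e: "Suc (p+2) = n" using n_def by simp
    have p1: "(\<Sum>m<n. alt_sign m (br (xs!m) (lp_alpha \<alpha>2 p \<eta> (del m xs)))) = (\<Sum>m<n. \<Sum>j<n-1. \<Sum>i<j. R1 (s1 m i) (s1 m j) m)"
    proof (intro sum.cong refl)
      fix m assume m: "m \<in> {..<n}"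
      have e2: "p + 2 = n - 1" using n_def by simp
      show "alt_sign m (br (xs!m) (lp_alpha \<alpha>2 p \<eta> (del m xs))) = (\<Sum>j<n-1. \<Sum>i<j. R1 (s1 m i) (s1 m j) m)"
        unfolding lp_alpha_def e2 B_sum B_alt alt_sum
        apply (intro sum.cong refl)
        subgoal for j i
          unfolding R1_def alt_alt
          apply (rule alt_cong2)
          using m apply (auto simp: s1_def)[1]
          using m by (simp add: E4[OF lenn] E5[OF lenn])
        done
    qed
    have p2: "(\<Sum>j<n. \<Sum>i<j. alt_sign (i+j) (lp_alpha \<alpha>2 p \<eta> (br (xs!i) (xs!j) # del i (del j xs)))) =
       (\<Sum>j<n. \<Sum>i<j. (\<Sum>k<Suc p. R2a i j (s2 i j k)) + (\<Sum>l<Suc p. \<Sum>k<l. R2b i j (s2 i j k) (s2 i j l)))"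
    proof (intro sum.cong refl)
      fix j i assume j: "j \<in> {..<n}" and i: "i \<in> {..<j}"
      have e3: "p + 2 = Suc (Suc p)" by simp
      have nn: "n - 2 = Suc p" using n_def by simp
      show "alt_sign (i+j) (lp_alpha \<alpha>2 p \<eta> (br (xs!i) (xs!j) # del i (del j xs))) =
        (\<Sum>k<Suc p. R2a i j (s2 i j k)) + (\<Sum>l<Suc p. \<Sum>k<l. R2b i j (s2 i j k) (s2 i j l))"
        unfolding lp_alpha_def e3 shift2 alt_add alt_sum
        apply (intro arg_cong2[where f="(+)"] sum.cong refl)
        subgoal for k
          unfolding R2a_def alt_alt
          apply (rule alt_cong2)
          using i j nn apply (auto simp: s2_def)[1]
          using i j nn by (simp add: E1[OF lenn] E2[OF lenn])
        subgoal for l k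
          unfolding R2b_def alt_alt
          apply (rule alt_cong2)
          using i j nn apply (auto simp: s2_def)[1]
          using i j nn by (simp add: E1[OF lenn] E3[OF lenn])
        done
    qed
    have "ce_d br br (p+2) (lp_alpha \<alpha>2 p \<eta>) xs =
       (\<Sum>m<n. alt_sign m (br (xs!m) (lp_alpha \<alpha>2 p \<eta> (del m xs)))) +
       (\<Sum>j<n. \<Sum>i<j. alt_sign (i+j) (lp_alpha \<alpha>2 p \<eta> (br (xs!i) (xs!j) # del i (del j xs))))"
      unfolding ce_d_def e ..
    also have "\<dots> = (\<Sum>m<n. \<Sum>j<n-1. \<Sum>i<j. R1 (s1 m i) (s1 m j) m) +
       ((\<Sum>j<n. \<Sum>i<j. \<Sum>k<Suc p. R2a i j (s2 i j k)) + (\<Sum>j<n. \<Sum>i<j. \<Sum>l<Suc p. \<Sum>k<l. R2b i j (s2 i j k) (s2 i j l)))"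
      unfolding p1 p2 by (simp only: sum.distrib)
    also have "\<dots> = (\<Sum>(i,j,c)\<in>P3 n. R1 i j c) + ((\<Sum>(i,j,c)\<in>P3 n. R2a i j c) + (\<Sum>(i,j,a,b)\<in>P4 n. R2b i j a b))"
      using G2[of R1 n] G1[of R2a n] G4[of R2b n] n_def by simp
    finally show ?thesis .
  qed

  have Sw: "(\<Sum>(i,j,a,b)\<in>P4 n. Lb i j a b) = (\<Sum>(i,j,a,b)\<in>P4 n. R2b i j a b)"
  proof -
    have "(\<Sum>(i,j,a,b)\<in>P4 n. Lb i j a b) = (\<Sum>(i,j,a,b)\<in>P4 n. R2b a b i j)"
    proof (rule sum.cong[OF refl])
      fix x assume x: "x \<in> P4 n"
      obtain i j a b where xe: "x = (i,j,a,b)" by (cases x) auto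
      have "Lb i j a b = R2b a b i j"
        unfolding Lb_def R2b_def
        apply (rule alt_cong2)
        using x xe apply (auto simp: P4_def)[1]
        by (simp add: insert_commute)
      then show "(case x of (i,j,a,b) \<Rightarrow> Lb i j a b) = (case x of (i,j,a,b) \<Rightarrow> R2b a b i j)"
        using xe by simp
    qed
    also have "\<dots> = (\<Sum>(i,j,a,b)\<in>P4 n. R2b i j a b)"
      using Swap[of R2b n] by simp
    finally show ?thesis .
  qed
  have F1: "(\<Sum>(i,j,c)\<in>P3 n. La i j c - R1 i j c - R2a i j c) =
      (\<Sum>(i,j,c)\<in>P3 n. La i j c) - (\<Sum>(i,j,c)\<in>P3 n. R1 i j c) - (\<Sum>(i,j,c)\<in>P3 n. R2a i j c)"
    by (simp add: sum_subtractf split_def)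
  have F2: "(\<Sum>(i,j,c)\<in>P3 n. La i j c - R1 i j c - R2a i j c) =
     (\<Sum>(a,b,c)\<in>T3 n. alt_sign (a+b+c) (ce_d br (hom_act br act) 2 (\<lambda>xs v. \<alpha>2 v xs)
          [xs!a, xs!b, xs!c] (\<eta> (map (nth xs) (fl n {a,b,c})))))"
    unfolding Group
  proof (rule sum.cong[OF refl])
    fix x assume x: "x \<in> T3 n"
    obtain a b c where xe: "x = (a,b,c)" by (cases x) auto
    have abc: "a < b" "b < c" using x xe by (auto simp: T3_def)
    have "La b c a - R1 b c a - R2a b c a + (La a c b - R1 a c b - R2a a c b) + (La a b c - R1 a b c - R2a a b c)
      = alt_sign (a+b+c) (ce_d br (hom_act br act) 2 (\<lambda>xs v. \<alpha>2 v xs)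
          [xs!a, xs!b, xs!c] (\<eta> (map (nth xs) (fl n {a,b,c}))))"
      using abc unfolding La_def R1_def R2a_def coc
      by (cases "even a"; cases "even b"; cases "even c") (simp_all add: alt_sign_def insert_commute algebra_simps)
    then show "(case x of (a,b,c) \<Rightarrow> La b c a - R1 b c a - R2a b c a + (La a c b - R1 a c b - R2a a c b) + (La a b c - R1 a b c - R2a a b c))
      = (case x of (a,b,c) \<Rightarrow> alt_sign (a+b+c) (ce_d br (hom_act br act) 2 (\<lambda>xs v. \<alpha>2 v xs)
          [xs!a, xs!b, xs!c] (\<eta> (map (nth xs) (fl n {a,b,c})))))"
      using xe by simp
  qed
  have "lp_alpha \<alpha>2 (p+1) (ce_d br act p \<eta>) xs - ce_d br br (p+2) (lp_alpha \<alpha>2 p \<eta>) xs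
     = (\<Sum>(i,j,c)\<in>P3 n. La i j c) - (\<Sum>(i,j,c)\<in>P3 n. R1 i j c) - (\<Sum>(i,j,c)\<in>P3 n. R2a i j c)"
    unfolding L R Sw by (simp add: algebra_simps)
  then show ?thesis using F1 F2 n_def by simp
qed



lemma alt_zero: "alt_sign k (0::'a::ab_group_add) = 0" by (simp add: alt_sign_def)

theorem corollary2p5:
  fixes sg :: "'k::field_char_0 \<Rightarrow> 'g::ab_group_add \<Rightarrow> 'g"
    and br :: "'g \<Rightarrow> 'g \<Rightarrow> 'g"
    and sv :: "'k \<Rightarrow> 'v::ab_group_add \<Rightarrow> 'v"
    and act :: "'g \<Rightarrow> 'v \<Rightarrow> 'v"
    and \<alpha>2 :: "'v \<Rightarrow> 'g list \<Rightarrow> 'g"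
  assumes "lie_algebra sg br"
    and "\<exists>B. finite_dimensional_vector_space sg B"
    and "lie_module sg br sv act"
    and "\<forall>v. cochain sg sg 2 (\<alpha>2 v)"
    and "\<forall>x y. Vector_Spaces.linear sv sg (\<lambda>v. \<alpha>2 v [x, y])"
  shows "dg_LP_module sg br sv act \<alpha>2 \<longleftrightarrow>
         ce_2cocycle br (hom_act br act) (\<lambda>xs v. \<alpha>2 v xs)"
proof -
  have addB: "\<And>x. additive (br x)"
    using assms(1) by (auto simp: lie_algebra_def intro: lin_additive)
  have addA: "\<And>x y. additive (\<lambda>v. \<alpha>2 v [x,y])"
    using assms(5) by (auto intro: lin_additive)
  note M = main[where ?\<alpha>2.0=\<alpha>2 and br=br, OF addA addB]
  show ?thesis
  proof
    assume dg: "dg_LP_module sg br sv act \<alpha>2"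
    show "ce_2cocycle br (hom_act br act) (\<lambda>xs v. \<alpha>2 v xs)"
      unfolding ce_2cocycle_def
    proof (intro allI ext)
      fix x0 x1 x2 :: 'g and v :: 'v
      let ?xs = "[x0, x1, x2]"
      have co: "cochain sg sv 0 (\<lambda>_. v)" by (simp add: cochain_def)
      from dg have "cochain sg sv 0 (\<lambda>_. v) \<and> length ?xs = 0 + 3 \<longrightarrow>
         lp_alpha \<alpha>2 (0+1) (ce_d br act 0 (\<lambda>_. v)) ?xs = ce_d br br (0+2) (lp_alpha \<alpha>2 0 (\<lambda>_. v)) ?xs"
        unfolding dg_LP_module_def by blast
      then have eq: "lp_alpha \<alpha>2 (0+1) (ce_d br act 0 (\<lambda>_. v)) ?xs = ce_d br br (0+2) (lp_alpha \<alpha>2 0 (\<lambda>_. v)) ?xs"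
        using co by (simp only: list.size add_0 One_nat_def numeral_3_eq_3) simp
      have M0: "lp_alpha \<alpha>2 (0+1) (ce_d br act 0 (\<lambda>_. v)) ?xs - ce_d br br (0+2) (lp_alpha \<alpha>2 0 (\<lambda>_. v)) ?xs
        = (\<Sum>(a,b,c)\<in>T3 (0+3). alt_sign (a+b+c) (ce_d br (hom_act br act) 2 (\<lambda>xs v. \<alpha>2 v xs)
          [?xs!a, ?xs!b, ?xs!c] ((\<lambda>_. v) (map (nth ?xs) (fl (0+3) {a,b,c})))))"
        by (rule M) (simp add: numeral_3_eq_3)
      have T: "T3 (0+3) = {(0,1,2)}" by (auto simp: T3_def)
      have "alt_sign 3 (ce_d br (hom_act br act) 2 (\<lambda>xs v. \<alpha>2 v xs) ?xs v) = 0"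
        using M0 unfolding eq T by simp
      then show "ce_d br (hom_act br act) 2 (\<lambda>xs v. \<alpha>2 v xs) ?xs v = 0 v"
        by (simp add: alt_sign_def)
    qed
  next
    assume cc: "ce_2cocycle br (hom_act br act) (\<lambda>xs v. \<alpha>2 v xs)"
    have z: "\<And>a b c w. ce_d br (hom_act br act) 2 (\<lambda>xs v. \<alpha>2 v xs) [a,b,c] w = 0"
      using cc unfolding ce_2cocycle_def by simp
    show "dg_LP_module sg br sv act \<alpha>2"
      unfolding dg_LP_module_def
    proof (intro allI impI)
      fix p :: nat and \<eta> :: "'g list \<Rightarrow> 'v" and xs :: "'g list" assume h: "cochain sg sv p \<eta> \<and> length xs = p + 3"
      have "lp_alpha \<alpha>2 (p+1) (ce_d br act p \<eta>) xs - ce_d br br (p+2) (lp_alpha \<alpha>2 p \<eta>) xs = 0"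
        using M[of xs p act \<eta>] h z by (simp add: alt_zero)
      then show "lp_alpha \<alpha>2 (p+1) (ce_d br act p \<eta>) xs = ce_d br br (p+2) (lp_alpha \<alpha>2 p \<eta>) xs"
        by simp
    qed
  qed
qed

end
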